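(* Let a group $G$ act uniformly equicontinuously on a cofinite graph $\Gamma$, let $\{R\mid R\in I\}$ be a fundamental system of $G$-invariant compatible cofinite entourages of $\Gamma$, and give $G$ the uniformity having $\{N_R\mid R\in I\}$ as a fundamental system of cofinite congruences. Then this uniformity on $G$ is Hausdorff if and only if $G$ acts faithfully on $\Gamma$.
   Context: A graph $\Gamma$ is a set $\Gamma=V(\Gamma)\sqcup E(\Gamma)$ with maps $s,t\colon E\to V$ and a fixed-point-free involution $e\mapsto\overline e$ with $s(\overline e)=t(e)$, $t(\overline e)=s(e)$. An equivalence relation $R$ on $\Gamma$ is compatible if $R\subseteq (V\times V)\cup(E\times E)$, $(e,e')\in R$ implies $(s(e),s(e')),(t(e),t(e')),(\overline e,\overline{e'})\in R$, and $(e,\overline e)\notin R$. A cofinite entourage is an entourage that is an equivalence relation with finitely many classes. A cofinite graph is a graph with a Hausdorff uniformity in which compatible cofinite entourages form a fundamental system. A group $G$ acts on $\Gamma$ if it acts on the set $\Gamma$ preserving vertices and edges, commuting with $s,t,\overline{\phantom e}$, and there is a $G$-invariant orientation. The action is uniformly equicontinuous if for each entourage $W$ there is an entourage $V$ with $(g\times g)[V]\subseteq W$ for all $g\in G$; such fundamental systems $\{R\}$ of $G$-invariant ($ (g\times g)[R]\subseteq R$ for all $g$) compatible cofinite entourages exist. $N_R=\{(g,h)\in G\times G:(g\cdot x,h\cdot x)\in R\ \forall x\in\Gamma\}$; these are cofinite congruences on $G$. The action is faithful if for every $g\neq 1$ there is $x\in\Gamma$ with $g\cdot x\ne x$. *)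

theory Defs
  imports Main "HOL-Algebra.Group_Action"
begin

text \<open>A graph: carrier X (the set Gamma), vertex set V, edges X - V,
  source s, target t, fixed-point-free involution bar on edges.\<close>
definition is_graph :: "'a set \<Rightarrow> 'a set \<Rightarrow> ('a \<Rightarrow> 'a) \<Rightarrow> ('a \<Rightarrow> 'a) \<Rightarrow> ('a \<Rightarrow> 'a) \<Rightarrow> bool" where
  "is_graph X V s t bar \<longleftrightarrow> V \<subseteq> X \<and>
     (\<forall>e \<in> X - V. s e \<in> V \<and> t e \<in> V \<and> bar e \<in> X - V \<and> bar e \<noteq> e \<and>
        bar (bar e) = e \<and> s (bar e) = t e \<and> t (bar e) = s e)"

definition uniformity_on :: "'a set \<Rightarrow> ('a \<times> 'a) set set \<Rightarrow> bool" where
  "uniformity_on X U \<longleftrightarrow> U \<noteq> {} \<and>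
     (\<forall>W \<in> U. Id_on X \<subseteq> W \<and> W \<subseteq> X \<times> X) \<and>
     (\<forall>W \<in> U. \<forall>W'. W \<subseteq> W' \<and> W' \<subseteq> X \<times> X \<longrightarrow> W' \<in> U) \<and>
     (\<forall>W \<in> U. \<forall>W' \<in> U. W \<inter> W' \<in> U) \<and>
     (\<forall>W \<in> U. W\<inverse> \<in> U) \<and>
     (\<forall>W \<in> U. \<exists>W' \<in> U. W' O W' \<subseteq> W)"

definition hausdorff_uniformity :: "'a set \<Rightarrow> ('a \<times> 'a) set set \<Rightarrow> bool" where
  "hausdorff_uniformity X U \<longleftrightarrow> \<Inter> U = Id_on X"

definition uniformity_generated :: "'a set \<Rightarrow> ('a \<times> 'a) set set \<Rightarrow> ('a \<times> 'a) set set" where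
  "uniformity_generated X B = {W. W \<subseteq> X \<times> X \<and> (\<exists>R \<in> B. R \<subseteq> W)}"

definition cofinite_entourage :: "'a set \<Rightarrow> ('a \<times> 'a) set set \<Rightarrow> ('a \<times> 'a) set \<Rightarrow> bool" where
  "cofinite_entourage X U R \<longleftrightarrow> R \<in> U \<and> equiv X R \<and> finite (X // R)"

definition compatible_rel :: "'a set \<Rightarrow> 'a set \<Rightarrow> ('a \<Rightarrow> 'a) \<Rightarrow> ('a \<Rightarrow> 'a) \<Rightarrow> ('a \<Rightarrow> 'a)
    \<Rightarrow> ('a \<times> 'a) set \<Rightarrow> bool" where
  "compatible_rel X V s t bar R \<longleftrightarrow> equiv X R \<and>
     R \<subseteq> (V \<times> V) \<union> ((X - V) \<times> (X - V)) \<and>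
     (\<forall>(e, e') \<in> R \<inter> ((X - V) \<times> (X - V)).
        (s e, s e') \<in> R \<and> (t e, t e') \<in> R \<and> (bar e, bar e') \<in> R) \<and>
     (\<forall>e \<in> X - V. (e, bar e) \<notin> R)"

definition cofinite_graph :: "'a set \<Rightarrow> 'a set \<Rightarrow> ('a \<Rightarrow> 'a) \<Rightarrow> ('a \<Rightarrow> 'a) \<Rightarrow> ('a \<Rightarrow> 'a)
    \<Rightarrow> ('a \<times> 'a) set set \<Rightarrow> bool" where
  "cofinite_graph X V s t bar U \<longleftrightarrow> is_graph X V s t bar \<and> uniformity_on X U \<and>
     hausdorff_uniformity X U \<and>
     (\<forall>W \<in> U. \<exists>R. cofinite_entourage X U R \<and> compatible_rel X V s t bar R \<and> R \<subseteq> W)"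

definition graph_action :: "('g, 'b) monoid_scheme \<Rightarrow> 'a set \<Rightarrow> 'a set \<Rightarrow> ('a \<Rightarrow> 'a) \<Rightarrow> ('a \<Rightarrow> 'a)
    \<Rightarrow> ('a \<Rightarrow> 'a) \<Rightarrow> ('g \<Rightarrow> 'a \<Rightarrow> 'a) \<Rightarrow> bool" where
  "graph_action G X V s t bar \<phi> \<longleftrightarrow> group_action G X \<phi> \<and>
     (\<forall>g \<in> carrier G. \<forall>x \<in> V. \<phi> g x \<in> V) \<and>
     (\<forall>g \<in> carrier G. \<forall>e \<in> X - V. \<phi> g e \<in> X - V \<and>
        s (\<phi> g e) = \<phi> g (s e) \<and> t (\<phi> g e) = \<phi> g (t e) \<and> bar (\<phi> g e) = \<phi> g (bar e)) \<and>
     (\<exists>Or \<subseteq> X - V. (\<forall>e \<in> X - V. e \<in> Or \<longleftrightarrow> bar e \<notin> Or) \<and>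
        (\<forall>g \<in> carrier G. \<forall>e \<in> Or. \<phi> g e \<in> Or))"

definition unif_equicontinuous :: "('g, 'b) monoid_scheme \<Rightarrow> ('a \<times> 'a) set set \<Rightarrow> ('g \<Rightarrow> 'a \<Rightarrow> 'a) \<Rightarrow> bool" where
  "unif_equicontinuous G U \<phi> \<longleftrightarrow>
     (\<forall>W \<in> U. \<exists>W' \<in> U. \<forall>g \<in> carrier G. (\<lambda>(x, y). (\<phi> g x, \<phi> g y)) ` W' \<subseteq> W)"

definition G_invariant :: "('g, 'b) monoid_scheme \<Rightarrow> ('g \<Rightarrow> 'a \<Rightarrow> 'a) \<Rightarrow> ('a \<times> 'a) set \<Rightarrow> bool" where
  "G_invariant G \<phi> R \<longleftrightarrow> (\<forall>g \<in> carrier G. (\<lambda>(x, y). (\<phi> g x, \<phi> g y)) ` R \<subseteq> R)"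

definition N_rel :: "('g, 'b) monoid_scheme \<Rightarrow> 'a set \<Rightarrow> ('g \<Rightarrow> 'a \<Rightarrow> 'a) \<Rightarrow> ('a \<times> 'a) set \<Rightarrow> ('g \<times> 'g) set" where
  "N_rel G X \<phi> R = {(g, h). g \<in> carrier G \<and> h \<in> carrier G \<and> (\<forall>x \<in> X. (\<phi> g x, \<phi> h x) \<in> R)}"

definition faithful_action :: "('g, 'b) monoid_scheme \<Rightarrow> 'a set \<Rightarrow> ('g \<Rightarrow> 'a \<Rightarrow> 'a) \<Rightarrow> bool" where
  "faithful_action G X \<phi> \<longleftrightarrow> (\<forall>g \<in> carrier G. g \<noteq> \<one>\<^bsub>G\<^esub> \<longrightarrow> (\<exists>x \<in> X. \<phi> g x \<noteq> x))"

end

theory Submission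
  imports Defs
begin

lemma inter_I:
  assumes "cofinite_graph X V s t bar U" "I \<subseteq> U" "\<forall>W \<in> U. \<exists>R \<in> I. R \<subseteq> W"
  shows "\<Inter> I = Id_on X"
proof -
  have "\<Inter> U = Id_on X" using assms(1) by (simp add: cofinite_graph_def hausdorff_uniformity_def)
  moreover have "\<Inter> I = \<Inter> U" using assms(2,3) by blast
  ultimately show ?thesis by simp
qed

lemma faith_iff:
  assumes "group G" "group_action G X \<phi>"
  shows "faithful_action G X \<phi> \<longleftrightarrow>
    (\<forall>g \<in> carrier G. \<forall>h \<in> carrier G. (\<forall>x \<in> X. \<phi> g x = \<phi> h x) \<longrightarrow> g = h)"
proof -
  interpret group G by fact
  interpret A: group_action G X \<phi> by fact
  have one: "\<And>x. x \<in> X \<Longrightarrow> \<phi> \<one>\<^bsub>G\<^esub> x = x" using A.id_eq_one by (metis restrict_apply')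
  show ?thesis
  proof
    assume f: "faithful_action G X \<phi>"
    show "\<forall>g \<in> carrier G. \<forall>h \<in> carrier G. (\<forall>x \<in> X. \<phi> g x = \<phi> h x) \<longrightarrow> g = h"
    proof (intro ballI impI)
      fix g h assume g: "g \<in> carrier G" and h: "h \<in> carrier G" and e: "\<forall>x \<in> X. \<phi> g x = \<phi> h x"
      have "\<forall>x \<in> X. \<phi> (inv\<^bsub>G\<^esub> h \<otimes>\<^bsub>G\<^esub> g) x = x"
      proof
        fix x assume x: "x \<in> X"
        have "\<phi> (inv\<^bsub>G\<^esub> h \<otimes>\<^bsub>G\<^esub> g) x = \<phi> (inv\<^bsub>G\<^esub> h) (\<phi> h x)" using A.composition_rule g h x e by simp
        also have "\<dots> = x"
        proof -
          have c: "\<phi> (inv\<^bsub>G\<^esub> h \<otimes>\<^bsub>G\<^esub> h) x = \<phi> (inv\<^bsub>G\<^esub> h) (\<phi> h x)"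
            by (rule A.composition_rule) (simp_all add: h x)
          show ?thesis using c one h x by simp
        qed
        finally show "\<phi> (inv\<^bsub>G\<^esub> h \<otimes>\<^bsub>G\<^esub> g) x = x" .
      qed
      hence "inv\<^bsub>G\<^esub> h \<otimes>\<^bsub>G\<^esub> g = \<one>\<^bsub>G\<^esub>" using f g h unfolding faithful_action_def by auto
      thus "g = h" using g h by (metis inv_equality inv_inv inv_closed)
    qed
  next
    assume H: "\<forall>g \<in> carrier G. \<forall>h \<in> carrier G. (\<forall>x \<in> X. \<phi> g x = \<phi> h x) \<longrightarrow> g = h"
    show "faithful_action G X \<phi>" unfolding faithful_action_def
      using H one by (metis one_closed)
  qed
qed

theorem mainTheorem6:
  fixes G :: "('g, 'b) monoid_scheme"
    and X V :: "'a set" and s t bar :: "'a \<Rightarrow> 'a"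
    and U :: "('a \<times> 'a) set set" and \<phi> :: "'g \<Rightarrow> 'a \<Rightarrow> 'a"
    and I :: "('a \<times> 'a) set set"
  assumes "group G"
    and "cofinite_graph X V s t bar U"
    and "graph_action G X V s t bar \<phi>"
    and "unif_equicontinuous G U \<phi>"
    and "I \<subseteq> U"
    and "\<forall>R \<in> I. G_invariant G \<phi> R \<and> compatible_rel X V s t bar R \<and> cofinite_entourage X U R"
    and "\<forall>W \<in> U. \<exists>R \<in> I. R \<subseteq> W"
  shows "hausdorff_uniformity (carrier G)
           (uniformity_generated (carrier G) ((\<lambda>R. N_rel G X \<phi> R) ` I))
         \<longleftrightarrow> faithful_action G X \<phi>"
proof -
  have ga: "group_action G X \<phi>" using assms(3) by (simp add: graph_action_def)
  interpret A: group_action G X \<phi> by fact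
  have clo: "\<And>g x. g \<in> carrier G \<Longrightarrow> x \<in> X \<Longrightarrow> \<phi> g x \<in> X" using A.element_image by blast
  have II: "\<Inter> I = Id_on X" using inter_I assms(2,5,7) by blast
  have Une: "U \<noteq> {}" using assms(2) by (simp add: cofinite_graph_def uniformity_on_def)
  then have Ine: "I \<noteq> {}" using assms(7) by blast
  let ?UG = "uniformity_generated (carrier G) ((\<lambda>R. N_rel G X \<phi> R) ` I)"
  have eq1: "\<Inter> ?UG = \<Inter> ((\<lambda>R. N_rel G X \<phi> R) ` I)"
  proof
    show "\<Inter> ?UG \<subseteq> \<Inter> ((\<lambda>R. N_rel G X \<phi> R) ` I)"
    proof
      fix p assume p: "p \<in> \<Inter> ?UG"
      have mem: "\<And>R. R \<in> I \<Longrightarrow> N_rel G X \<phi> R \<in> ?UG"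
        unfolding uniformity_generated_def N_rel_def by auto
      show "p \<in> \<Inter> ((\<lambda>R. N_rel G X \<phi> R) ` I)" using p mem by auto
    qed
    show "\<Inter> ((\<lambda>R. N_rel G X \<phi> R) ` I) \<subseteq> \<Inter> ?UG"
      unfolding uniformity_generated_def by auto
  qed
  have eq2: "\<Inter> ((\<lambda>R. N_rel G X \<phi> R) ` I) =
     {(g,h). g \<in> carrier G \<and> h \<in> carrier G \<and> (\<forall>x \<in> X. \<phi> g x = \<phi> h x)}"
  proof -
    have key: "((g,h) \<in> \<Inter> ((\<lambda>R. N_rel G X \<phi> R) ` I)) =
      ((g,h) \<in> {(g,h). g \<in> carrier G \<and> h \<in> carrier G \<and> (\<forall>x \<in> X. \<phi> g x = \<phi> h x)})" for g h
    proof
      assume a: "(g,h) \<in> \<Inter> ((\<lambda>R. N_rel G X \<phi> R) ` I)"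
      then have gh: "g \<in> carrier G" "h \<in> carrier G" using Ine unfolding N_rel_def by auto
      have "\<forall>x \<in> X. (\<phi> g x, \<phi> h x) \<in> \<Inter> I" using a unfolding N_rel_def by auto
      then show "(g,h) \<in> {(g,h). g \<in> carrier G \<and> h \<in> carrier G \<and> (\<forall>x \<in> X. \<phi> g x = \<phi> h x)}"
        using gh II by auto
    next
      assume a: "(g,h) \<in> {(g,h). g \<in> carrier G \<and> h \<in> carrier G \<and> (\<forall>x \<in> X. \<phi> g x = \<phi> h x)}"
      then have "\<forall>x \<in> X. (\<phi> g x, \<phi> h x) \<in> \<Inter> I" using II clo by auto
      then show "(g,h) \<in> \<Inter> ((\<lambda>R. N_rel G X \<phi> R) ` I)" using a unfolding N_rel_def by auto
    qed
    show ?thesis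
      apply (rule Set.set_eqI)
      subgoal for z using key[of "fst z" "snd z"] by simp
      done
  qed
  have "hausdorff_uniformity (carrier G) ?UG \<longleftrightarrow>
     (\<forall>g \<in> carrier G. \<forall>h \<in> carrier G. (\<forall>x \<in> X. \<phi> g x = \<phi> h x) \<longrightarrow> g = h)"
    unfolding hausdorff_uniformity_def eq1 eq2 Id_on_def by auto
  also have "\<dots> \<longleftrightarrow> faithful_action G X \<phi>" using faith_iff[OF assms(1) ga] by simp
  finally show ?thesis .
qed

end
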